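(* Let $\mathfrak{A}\subset\mathfrak{F}=\mathbb{C}(x_1,\ldots,x_n)$ be the cluster algebra of geometric type defined by an initial seed $(\mathbf{x},B)$, $\mathbf{x}=(x_1,\ldots,x_n)$, where $B=(b_{ij})$ is an $m\times n$ integer matrix ($m\le n$) whose principal $m\times m$ submatrix is skew-symmetrizable, and let $\Lambda=(\lambda_{ij})$ be a skew-symmetric $n\times n$ matrix such that the log-canonical Poisson bracket $\{x_i,x_j\}_\Lambda=\lambda_{ij}x_ix_j$ (extended to $\mathfrak{F}$) is compatible with $\mathfrak{A}$. Then $\{\cdot,\cdot\}_\Lambda$ restricts to a Poisson algebra structure on the upper bound $\mathcal{U}_{\mathbf{x},B}(\mathfrak{A})$ and on the upper cluster algebra $\mathcal{U}(\mathfrak{A})$; i.e. both are closed under $\{\cdot,\cdot\}_\Lambda$.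
   Context: Cluster mutation: for $1\le i\le m$ the exchange polynomial is $P_i=\prod_{k=1}^n x_k^{\max(b_{ik},0)}+\prod_{k=1}^n x_k^{-\min(b_{ik},0)}$, and $y_i\in\mathfrak{F}$ is defined by $x_iy_i=P_i$; the new extended cluster is $(x_1,\ldots,x_{i-1},y_i,x_{i+1},\ldots,x_n)$, with exchange matrix obtained by the usual Fomin–Zelevinsky matrix mutation; $x_{m+1},\ldots,x_n$ are frozen and never mutated. The cluster algebra is the subalgebra of $\mathfrak{F}$ generated by all cluster variables of all seeds mutation equivalent to $(\mathbf{x},B)$. A Poisson bracket on $\mathfrak{F}$ is log-canonical with respect to an extended cluster $(z_1,\ldots,z_n)$ if $\{z_i,z_j\}=c_{ij}z_iz_j$ with $c_{ij}\in\mathbb{C}$; it is compatible with $\mathfrak{A}$ if it is log-canonical with respect to every extended cluster. The upper bound is $\mathcal{U}_{\mathbf{x},B}(\mathfrak{A})=\bigcap_{j=1}^m\mathbb{C}[x_1^{\pm1},\ldots,x_{j-1}^{\pm1},x_j,y_j,x_{j+1}^{\pm1},\ldots,x_m^{\pm1},x_{m+1},\ldots,x_n]$, and the upper cluster algebra $\mathcal{U}(\mathfrak{A})$ is the intersection of the upper bounds $\mathcal{U}_{\mathbf{x}',B'}(\mathfrak{A})$ over all seeds $(\mathbf{x}',B')$ mutation equivalent to $(\mathbf{x},B)$. *)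

theory Defs
  imports Complex_Main "HOL-Library.Poly_Mapping" "HOL-Computational_Algebra.Fraction_Field"
begin

text \<open>The ambient field: rational functions over the complex numbers, realised as the
fraction field of multivariate polynomials (monomials are finitely supported exponent
vectors indexed by nat).  Variables are indexed 1..n.\<close>

type_synonym rf = "((nat \<Rightarrow>\<^sub>0 nat) \<Rightarrow>\<^sub>0 complex) fract"

definition cst :: "complex \<Rightarrow> rf" where
  "cst c = Fract (Poly_Mapping.single 0 c) 1"

definition var :: "nat \<Rightarrow> rf" where
  "var i = Fract (Poly_Mapping.single (Poly_Mapping.single i 1) 1) 1"

inductive_set ratfun :: "nat \<Rightarrow> rf set" for n :: nat where
  rf_cst: "cst c \<in> ratfun n"
| rf_var: "i \<in> {1..n} \<Longrightarrow> var i \<in> ratfun n"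
| rf_add: "f \<in> ratfun n \<Longrightarrow> g \<in> ratfun n \<Longrightarrow> f + g \<in> ratfun n"
| rf_mult: "f \<in> ratfun n \<Longrightarrow> g \<in> ratfun n \<Longrightarrow> f * g \<in> ratfun n"
| rf_uminus: "f \<in> ratfun n \<Longrightarrow> - f \<in> ratfun n"
| rf_inverse: "f \<in> ratfun n \<Longrightarrow> inverse f \<in> ratfun n"

inductive_set alg_gen :: "rf set \<Rightarrow> rf set" for S :: "rf set" where
  ag_cst: "cst c \<in> alg_gen S"
| ag_gen: "s \<in> S \<Longrightarrow> s \<in> alg_gen S"
| ag_add: "f \<in> alg_gen S \<Longrightarrow> g \<in> alg_gen S \<Longrightarrow> f + g \<in> alg_gen S"
| ag_mult: "f \<in> alg_gen S \<Longrightarrow> g \<in> alg_gen S \<Longrightarrow> f * g \<in> alg_gen S"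

text \<open>Seeds: extended cluster (indices 1..n) and exchange matrix (rows 1..m, columns 1..n).\<close>
type_synonym seed = "(nat \<Rightarrow> rf) \<times> (nat \<Rightarrow> nat \<Rightarrow> int)"

definition exch_poly :: "nat \<Rightarrow> seed \<Rightarrow> nat \<Rightarrow> rf" where
  "exch_poly n s i =
     (\<Prod>k\<in>{1..n}. fst s k ^ nat (max (snd s i k) 0)) +
     (\<Prod>k\<in>{1..n}. fst s k ^ nat (- min (snd s i k) 0))"

definition exch_var :: "nat \<Rightarrow> seed \<Rightarrow> nat \<Rightarrow> rf" where
  "exch_var n s i = exch_poly n s i / fst s i"

definition mat_mut :: "nat \<Rightarrow> (nat \<Rightarrow> nat \<Rightarrow> int) \<Rightarrow> (nat \<Rightarrow> nat \<Rightarrow> int)" where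
  "mat_mut k B = (\<lambda>i j. if i = k \<or> j = k then - B i j
      else B i j + (\<bar>B i k\<bar> * B k j + B i k * \<bar>B k j\<bar>) div 2)"

definition mutate :: "nat \<Rightarrow> nat \<Rightarrow> seed \<Rightarrow> seed" where
  "mutate n k s = ((fst s)(k := exch_var n s k), mat_mut k (snd s))"

inductive_set mut_class :: "nat \<Rightarrow> nat \<Rightarrow> seed \<Rightarrow> seed set" for m n :: nat and s0 :: seed where
  mc_init: "s0 \<in> mut_class m n s0"
| mc_step: "s \<in> mut_class m n s0 \<Longrightarrow> k \<in> {1..m} \<Longrightarrow> mutate n k s \<in> mut_class m n s0"

text \<open>Generators of the ring C[x_1^{+-1},...,x_j,y_j,...,x_m^{+-1},x_{m+1},...,x_n].\<close>
definition laurent_gens :: "nat \<Rightarrow> nat \<Rightarrow> seed \<Rightarrow> nat \<Rightarrow> rf set" where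
  "laurent_gens m n s j =
     {fst s i | i. i \<in> {1..n}} \<union> {exch_var n s j} \<union>
     {inverse (fst s i) | i. i \<in> {1..m} \<and> i \<noteq> j}"

text \<open>Upper bound U_{x,B}(A) (an intersection inside F; equals F if m = 0).\<close>
definition upper_bound :: "nat \<Rightarrow> nat \<Rightarrow> seed \<Rightarrow> rf set" where
  "upper_bound m n s = {f \<in> ratfun n. \<forall>j\<in>{1..m}. f \<in> alg_gen (laurent_gens m n s j)}"

definition upper_cluster_algebra :: "nat \<Rightarrow> nat \<Rightarrow> seed \<Rightarrow> rf set" where
  "upper_cluster_algebra m n s0 =
     {f \<in> ratfun n. \<forall>s\<in>mut_class m n s0. f \<in> upper_bound m n s}"

definition log_canonical :: "(rf \<Rightarrow> rf \<Rightarrow> rf) \<Rightarrow> nat \<Rightarrow> (nat \<Rightarrow> rf) \<Rightarrow> bool" where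
  "log_canonical br n z =
     (\<forall>i\<in>{1..n}. \<forall>j\<in>{1..n}. \<exists>c::complex. br (z i) (z j) = cst c * z i * z j)"

definition compatible :: "(rf \<Rightarrow> rf \<Rightarrow> rf) \<Rightarrow> nat \<Rightarrow> nat \<Rightarrow> seed \<Rightarrow> bool" where
  "compatible br m n s0 = (\<forall>s\<in>mut_class m n s0. log_canonical br n (fst s))"

text \<open>br is the log-canonical bracket {x_i,x_j} = lambda_ij x_i x_j extended to F:
a C-bilinear skew-symmetric biderivation of F taking the prescribed values on the
generators (such an extension is unique).\<close>
definition is_lambda_bracket :: "nat \<Rightarrow> (nat \<Rightarrow> nat \<Rightarrow> complex) \<Rightarrow> (rf \<Rightarrow> rf \<Rightarrow> rf) \<Rightarrow> bool" where
  "is_lambda_bracket n \<Lambda> br =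
     ((\<forall>f\<in>ratfun n. \<forall>g\<in>ratfun n. \<forall>h\<in>ratfun n.
         br (f + g) h = br f h + br g h \<and>
         br (f * g) h = f * br g h + g * br f h) \<and>
      (\<forall>f\<in>ratfun n. \<forall>g\<in>ratfun n. \<forall>c. br (cst c * f) g = cst c * br f g) \<and>
      (\<forall>f\<in>ratfun n. \<forall>g\<in>ratfun n. br f g = - br g f) \<and>
      (\<forall>i\<in>{1..n}. \<forall>j\<in>{1..n}. br (var i) (var j) = cst (\<Lambda> i j) * var i * var j))"

end

theory Submission
  imports Defs
begin

lemma cst_add: "cst (a+b) = cst a + cst b" by (simp add: cst_def single_add)
lemma cst_mult: "cst (a*b) = cst a * cst b" by (simp add: cst_def mult_single)
lemma cst_one: "cst 1 = 1" by (simp add: cst_def One_fract_def)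
lemma cst_zero: "cst 0 = 0" by (simp add: cst_def Zero_fract_def)
lemma cst_uminus: "cst (-a) = - cst a" by (simp add: cst_def single_uminus)
lemma pm2_nz: "(2::(nat \<Rightarrow>\<^sub>0 nat) \<Rightarrow>\<^sub>0 complex) \<noteq> 0"
proof
  assume "(2::(nat \<Rightarrow>\<^sub>0 nat) \<Rightarrow>\<^sub>0 complex) = 0"
  hence "Poly_Mapping.lookup (2::(nat \<Rightarrow>\<^sub>0 nat) \<Rightarrow>\<^sub>0 complex) 0 = Poly_Mapping.lookup 0 0" by simp
  moreover have "Poly_Mapping.lookup (2::(nat \<Rightarrow>\<^sub>0 nat) \<Rightarrow>\<^sub>0 complex) 0 = 2"
    unfolding lookup_numeral by simp
  ultimately show False by simp
qed

lemma two_nz: "(2::rf) \<noteq> 0"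
proof
  assume "(2::rf) = 0"
  hence "cst 2 = 0" using cst_add[of 1 1] cst_one by simp
  hence "Fract 2 1 = Fract 0 (1::(nat \<Rightarrow>\<^sub>0 nat) \<Rightarrow>\<^sub>0 complex)"
    by (simp add: cst_def Zero_fract_def)
  hence "(2::(nat \<Rightarrow>\<^sub>0 nat) \<Rightarrow>\<^sub>0 complex) = 0"
    by (simp add: eq_fract)
  thus False using pm2_nz by blast
qed

lemma one_in: "1 \<in> ratfun n" using rf_cst[of 1 n] by (simp add: cst_one)
lemma zero_in: "0 \<in> ratfun n" using rf_cst[of 0 n] by (simp add: cst_zero)
lemma pow_in: "a \<in> ratfun n \<Longrightarrow> a ^ e \<in> ratfun n"
  by (induction e) (auto intro: rf_mult one_in)
lemma prod_in: "finite A \<Longrightarrow> (\<forall>k\<in>A. f k \<in> ratfun n) \<Longrightarrow> prod f A \<in> ratfun n"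
  by (induction A rule: finite_induct) (auto intro: rf_mult one_in)

lemma ag_one: "1 \<in> alg_gen S" using ag_cst[of 1 S] by (simp add: cst_one)
lemma ag_zero: "0 \<in> alg_gen S" using ag_cst[of 0 S] by (simp add: cst_zero)
lemma ag_uminus: "a \<in> alg_gen S \<Longrightarrow> - a \<in> alg_gen S"
  using ag_mult[OF ag_cst[of "-1"]] by (simp add: cst_uminus cst_one) 
lemma ag_pow: "a \<in> alg_gen S \<Longrightarrow> a ^ e \<in> alg_gen S"
  by (induction e) (auto intro: ag_mult ag_one)
lemma ag_prod: "finite A \<Longrightarrow> (\<forall>k\<in>A. f k \<in> alg_gen S) \<Longrightarrow> prod f A \<in> alg_gen S"
  by (induction A rule: finite_induct) (auto intro: ag_mult ag_one)
lemma alg_gen_sub: assumes "S \<subseteq> ratfun n" "f \<in> alg_gen S" shows "f \<in> ratfun n"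
  using assms(2) by induction (use assms(1) in \<open>auto intro: rf_cst rf_add rf_mult\<close>)

locale lbr =
  fixes n :: nat and br :: "rf \<Rightarrow> rf \<Rightarrow> rf"
  assumes br_add: "\<lbrakk>f \<in> ratfun n; g \<in> ratfun n; h \<in> ratfun n\<rbrakk> \<Longrightarrow> br (f + g) h = br f h + br g h"
  and br_mult: "\<lbrakk>f \<in> ratfun n; g \<in> ratfun n; h \<in> ratfun n\<rbrakk> \<Longrightarrow> br (f * g) h = f * br g h + g * br f h"
  and br_smult: "\<lbrakk>f \<in> ratfun n; g \<in> ratfun n\<rbrakk> \<Longrightarrow> br (cst c * f) g = cst c * br f g"
  and br_skew: "\<lbrakk>f \<in> ratfun n; g \<in> ratfun n\<rbrakk> \<Longrightarrow> br f g = - br g f"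
  and br_var: "\<lbrakk>i \<in> {1..n}; j \<in> {1..n}\<rbrakk> \<Longrightarrow> br (var i) (var j) \<in> ratfun n"
begin

lemma br_one: assumes h: "h \<in> ratfun n" shows "br 1 h = 0"
proof -
  have "br 1 h = br 1 h + br 1 h" using br_mult[OF one_in one_in h] by (simp only: mult_1)
  thus ?thesis by (simp only: add_cancel_right_right)
qed

lemma br_cst: "h \<in> ratfun n \<Longrightarrow> br (cst c) h = 0"
  using br_smult[OF one_in, of h c] br_one[of h] by simp

lemma br_zero: "h \<in> ratfun n \<Longrightarrow> br 0 h = 0"
  using br_cst[of h 0] by (simp add: cst_zero)

lemma br_uminus: "f \<in> ratfun n \<Longrightarrow> h \<in> ratfun n \<Longrightarrow> br (-f) h = - br f h"
  using br_smult[of f h "-1"] by (simp add: cst_uminus cst_one)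

lemma br_inverse: assumes f: "f \<in> ratfun n" and h: "h \<in> ratfun n"
  shows "br (inverse f) h = - (inverse f * inverse f) * br f h"
proof (cases "f = 0")
  case True thus ?thesis using br_zero h by simp
next
  case False
  have fi: "inverse f \<in> ratfun n" using f by (rule rf_inverse)
  have "br (f * inverse f) h = 0" using False br_one h by simp
  moreover have "br (f * inverse f) h = f * br (inverse f) h + inverse f * br f h" using br_mult f fi h by blast
  ultimately have e0: "f * br (inverse f) h + inverse f * br f h = 0" by simp
  have e: "f * br (inverse f) h = - (inverse f * br f h)" using e0 by (simp only: eq_neg_iff_add_eq_0)
  have "br (inverse f) h = inverse f * (f * br (inverse f) h)" using False by simp
  also have "\<dots> = - (inverse f * inverse f) * br f h" unfolding e by simp
  finally show ?thesis .
qed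

lemma br_self: "a \<in> ratfun n \<Longrightarrow> br a a = 0"
proof -
  assume a: "a \<in> ratfun n"
  have e: "br a a = - br a a" by (rule br_skew[OF a a])
  have "br a a + br a a = br a a + - br a a" using e by (rule arg_cong[where f="(+) (br a a)"])
  hence "br a a + br a a = 0" by (simp only: add.right_inverse)
  hence "2 * br a a = 0" by (simp only: mult_2)
  thus ?thesis using two_nz by simp
qed

lemma br_cst2: "h \<in> ratfun n \<Longrightarrow> br h (cst c) = 0"
  using br_skew[OF _ rf_cst, of h c] br_cst by simp
lemma br_add2: "\<lbrakk>f \<in> ratfun n; g \<in> ratfun n; h \<in> ratfun n\<rbrakk> \<Longrightarrow> br h (f + g) = br h f + br h g"
  using br_skew[of h "f+g"] br_add[of f g h] br_skew[of h f] br_skew[of h g] rf_add by simp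
lemma br_mult2: "\<lbrakk>f \<in> ratfun n; g \<in> ratfun n; h \<in> ratfun n\<rbrakk> \<Longrightarrow> br h (f * g) = f * br h g + g * br h f"
  using br_skew[of h "f*g"] br_mult[of f g h] br_skew[of h f] br_skew[of h g] rf_mult by simp
lemma br_uminus2: "f \<in> ratfun n \<Longrightarrow> h \<in> ratfun n \<Longrightarrow> br h (-f) = - br h f"
  using br_skew[of h "-f"] br_uminus[of f h] br_skew[of h f] rf_uminus by simp
lemma br_inverse2: "f \<in> ratfun n \<Longrightarrow> h \<in> ratfun n \<Longrightarrow> br h (inverse f) = - (inverse f * inverse f) * br h f"
  using br_skew[of h "inverse f"] br_inverse[of f h] br_skew[of h f] rf_inverse by simp

lemma br_var_closed: assumes "f \<in> ratfun n" "j \<in> {1..n}" shows "br f (var j) \<in> ratfun n"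
  using assms(1)
proof induction
  case (rf_cst c) thus ?case using br_cst rf_var assms(2) zero_in by simp
next
  case (rf_var i) thus ?case using br_var assms(2) by simp
next
  case (rf_add f g) thus ?case using br_add rf_var assms(2) ratfun.rf_add by simp
next
  case (rf_mult f g) thus ?case using br_mult rf_var assms(2) ratfun.rf_add ratfun.rf_mult by simp
next
  case (rf_uminus f) thus ?case using br_uminus rf_var assms(2) ratfun.rf_uminus by simp
next
  case (rf_inverse f) thus ?case using br_inverse rf_var assms(2) ratfun.rf_uminus ratfun.rf_mult
      ratfun.rf_inverse pow_in by simp
qed

lemma br_closed: assumes "g \<in> ratfun n" "f \<in> ratfun n" shows "br f g \<in> ratfun n"
  using assms(1)
proof induction
  case (rf_cst c) thus ?case using br_cst2 assms(2) zero_in by simp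
next
  case (rf_var i) thus ?case using br_var_closed assms(2) by simp
next
  case (rf_add f' g) thus ?case using br_add2 assms(2) ratfun.rf_add by simp
next
  case (rf_mult f' g) thus ?case using br_mult2 assms(2) ratfun.rf_add ratfun.rf_mult by simp
next
  case (rf_uminus f') thus ?case using br_uminus2 assms(2) ratfun.rf_uminus by simp
next
  case (rf_inverse f') thus ?case using br_inverse2 assms(2) ratfun.rf_uminus ratfun.rf_mult
      ratfun.rf_inverse pow_in by simp
qed

lemma alg_gen_closed:
  assumes S: "S \<subseteq> ratfun n" and gens: "\<And>a b. a \<in> S \<Longrightarrow> b \<in> S \<Longrightarrow> br a b \<in> alg_gen S"
    and f: "f \<in> alg_gen S" and g: "g \<in> alg_gen S"
  shows "br f g \<in> alg_gen S"
proof -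
  have R: "\<And>x. x \<in> alg_gen S \<Longrightarrow> x \<in> ratfun n" using alg_gen_sub[OF S] by blast
  have step1: "br f' b \<in> alg_gen S" if "b \<in> S" "f' \<in> alg_gen S" for b f'
    using that(2)
  proof induction
    case (ag_cst c) thus ?case using br_cst S that(1) ag_zero by auto
  next
    case (ag_gen s) thus ?case using gens that(1) by blast
  next
    case (ag_add f g) thus ?case using br_add R S that(1) alg_gen.ag_add by auto
  next
    case (ag_mult f g) thus ?case using br_mult R S that(1) alg_gen.ag_add alg_gen.ag_mult by auto
  qed
  show ?thesis using g
  proof induction
    case (ag_cst c) thus ?case using br_cst2 R f ag_zero by auto
  next
    case (ag_gen s) thus ?case using step1 f by blast
  next
    case (ag_add f' g') thus ?case using br_add2 R f alg_gen.ag_add by auto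
  next
    case (ag_mult f' g') thus ?case using br_mult2 R f alg_gen.ag_add alg_gen.ag_mult by auto
  qed
qed

end


lemma exch_poly_in: "\<forall>k\<in>{1..n}. fst s k \<in> ratfun n \<Longrightarrow> exch_poly n s i \<in> ratfun n"
  unfolding exch_poly_def by (auto intro!: rf_add prod_in pow_in)

lemma exch_var_in: "\<forall>k\<in>{1..n}. fst s k \<in> ratfun n \<Longrightarrow> j \<in> {1..n} \<Longrightarrow> exch_var n s j \<in> ratfun n"
  unfolding exch_var_def divide_inverse by (auto intro!: rf_mult rf_inverse exch_poly_in)

lemma seed_in: assumes "m \<le> n" "s \<in> mut_class m n (var, B)" shows "\<forall>i\<in>{1..n}. fst s i \<in> ratfun n"
  using assms(2)
proof induction
  case mc_init thus ?case by (auto intro: rf_var)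
next
  case (mc_step s k) thus ?case using assms(1) exch_var_in[of n s k]
    by (auto simp: mutate_def)
qed

context lbr begin

definition LC where "LC a b \<longleftrightarrow> (\<exists>c. br a b = cst c * a * b)"

lemma LC_alg: "LC a b \<Longrightarrow> a \<in> alg_gen S \<Longrightarrow> b \<in> alg_gen S \<Longrightarrow> br a b \<in> alg_gen S"
  unfolding LC_def by (auto intro!: ag_mult[OF ag_mult[OF ag_cst]])

lemma LC_sym: assumes "a \<in> ratfun n" "b \<in> ratfun n" "LC a b" shows "LC b a"
proof -
  obtain c where c: "br a b = cst c * a * b" using assms(3) LC_def by blast
  have "br b a = cst (-c) * b * a" using br_skew[OF assms(2,1)] c by (simp add: cst_uminus)
  thus ?thesis unfolding LC_def by blast
qed

lemma LC_inv2: assumes "a \<in> ratfun n" "b \<in> ratfun n" "LC a b" shows "LC a (inverse b)"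
proof -
  obtain c where c: "br a b = cst c * a * b" using assms(3) LC_def by blast
  have "br a (inverse b) = cst (-c) * a * inverse b"
  proof (cases "b = 0")
    case True thus ?thesis using br_cst2[OF assms(1), of 0] by (simp add: cst_zero)
  next
    case False thus ?thesis using br_inverse2[OF assms(2,1)] c by (simp add: cst_uminus field_simps)
  qed
  thus ?thesis unfolding LC_def by blast
qed

lemma LC_inv1: assumes "a \<in> ratfun n" "b \<in> ratfun n" "LC a b" shows "LC (inverse a) b"
  using LC_sym[OF assms(2) rf_inverse[OF assms(1)] LC_inv2[OF assms(2,1) LC_sym[OF assms]]] .

lemma LC_one: "x \<in> ratfun n \<Longrightarrow> LC 1 x"
  unfolding LC_def using br_one by (auto intro: exI[of _ 0] simp: cst_zero)

lemma LC_mult: assumes "a \<in> ratfun n" "b \<in> ratfun n" "x \<in> ratfun n" "LC a x" "LC b x"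
  shows "LC (a*b) x"
proof -
  obtain c1 where c1: "br a x = cst c1 * a * x" using assms(4) LC_def by blast
  obtain c2 where c2: "br b x = cst c2 * b * x" using assms(5) LC_def by blast
  have "br (a*b) x = cst (c1+c2) * (a*b) * x"
    using br_mult[OF assms(1-3)] c1 c2 by (simp add: cst_add algebra_simps)
  thus ?thesis unfolding LC_def by blast
qed

lemma LC_pow: "a \<in> ratfun n \<Longrightarrow> x \<in> ratfun n \<Longrightarrow> LC a x \<Longrightarrow> LC (a ^ e) x"
  by (induction e) (auto intro: LC_one LC_mult pow_in)

lemma LC_prod: "finite A \<Longrightarrow> x \<in> ratfun n \<Longrightarrow> (\<forall>k\<in>A. z k \<in> ratfun n \<and> LC (z k) x)
   \<Longrightarrow> LC (\<Prod>k\<in>A. z k ^ e k) x"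
proof (induction A rule: finite_induct)
  case empty thus ?case using LC_one by simp
next
  case (insert a A)
  have "(\<Prod>k\<in>A. z k ^ e k) \<in> ratfun n" using insert by (auto intro!: prod_in pow_in)
  thus ?case using insert by (auto intro!: LC_mult LC_pow pow_in)
qed

end

locale lbr_seed = lbr +
  fixes m :: nat and B :: "nat \<Rightarrow> nat \<Rightarrow> int"
  assumes mn: "m \<le> n" and comp: "compatible br m n (var, B)"
begin

lemma gens_closed:
  assumes s: "s \<in> mut_class m n (var, B)" and j: "j \<in> {1..m}"
    and a: "a \<in> laurent_gens m n s j" and b: "b \<in> laurent_gens m n s j"
  shows "br a b \<in> alg_gen (laurent_gens m n s j)"
proof -
  define G where "G = laurent_gens m n s j"
  define X where "X = fst s"
  define Y where "Y = exch_var n s j"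
  have jn: "j \<in> {1..n}" using j mn by auto
  have Xin: "\<And>i. i \<in> {1..n} \<Longrightarrow> X i \<in> ratfun n" using seed_in[OF mn s] X_def by blast
  have Yin: "Y \<in> ratfun n" using exch_var_in[of n s j] seed_in[OF mn s] jn Y_def by blast
  have XG: "\<And>i. i \<in> {1..n} \<Longrightarrow> X i \<in> alg_gen G" unfolding G_def laurent_gens_def X_def
    by (auto intro: ag_gen)
  have YG: "Y \<in> alg_gen G" unfolding G_def laurent_gens_def Y_def by (auto intro: ag_gen)
  have IG: "\<And>i. i \<in> {1..m} \<Longrightarrow> i \<noteq> j \<Longrightarrow> inverse (X i) \<in> alg_gen G"
    unfolding G_def laurent_gens_def X_def by (auto intro: ag_gen)
  have s': "mutate n j s \<in> mut_class m n (var, B)" using s j by (rule mc_step)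
  have lc: "log_canonical br n X" using comp s unfolding compatible_def X_def by blast
  have lc': "log_canonical br n (X(j := Y))" using comp s' unfolding compatible_def
    by (metis fst_conv mutate_def X_def Y_def)
  have LCX: "\<And>i k. i \<in> {1..n} \<Longrightarrow> k \<in> {1..n} \<Longrightarrow> LC (X i) (X k)"
    using lc unfolding log_canonical_def LC_def by blast
  have LCXY: "\<And>i. i \<in> {1..n} \<Longrightarrow> i \<noteq> j \<Longrightarrow> LC (X i) Y"
  proof -
    fix i assume "i \<in> {1..n}" "i \<noteq> j"
    thus "LC (X i) Y" using lc' jn unfolding log_canonical_def LC_def
      by (metis fun_upd_same fun_upd_other)
  qed
  have LCYX: "\<And>i. i \<in> {1..n} \<Longrightarrow> i \<noteq> j \<Longrightarrow> LC Y (X i)"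
    using LCXY LC_sym Xin Yin by blast
  have LCYY: "LC Y Y" using lc' jn unfolding log_canonical_def LC_def by (metis fun_upd_same)
  have special: "br Y (X j) \<in> alg_gen G"
  proof (cases "X j = 0")
    case True
    hence "Y = 0" unfolding Y_def exch_var_def X_def by simp
    thus ?thesis using br_zero Xin jn ag_zero by simp
  next
    case False
    define M1 where "M1 = (\<Prod>k\<in>{1..n}. X k ^ nat (max (snd s j k) 0))"
    define M2 where "M2 = (\<Prod>k\<in>{1..n}. X k ^ nat (- min (snd s j k) 0))"
    have P: "exch_poly n s j = M1 + M2" unfolding exch_poly_def M1_def M2_def X_def by simp
    have YX: "Y * X j = M1 + M2" unfolding Y_def exch_var_def P[symmetric] X_def using False X_def
      by simp
    have M1in: "M1 \<in> ratfun n" unfolding M1_def using Xin by (auto intro!: prod_in pow_in)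
    have M2in: "M2 \<in> ratfun n" unfolding M2_def using Xin by (auto intro!: prod_in pow_in)
    have M1G: "M1 \<in> alg_gen G" unfolding M1_def using XG by (auto intro!: ag_prod ag_pow)
    have M2G: "M2 \<in> alg_gen G" unfolding M2_def using XG by (auto intro!: ag_prod ag_pow)
    have "LC M1 (X j)" unfolding M1_def using Xin LCX jn by (auto intro!: LC_prod)
    then obtain c1 where c1: "br M1 (X j) = cst c1 * M1 * X j" unfolding LC_def by blast
    have "LC M2 (X j)" unfolding M2_def using Xin LCX jn by (auto intro!: LC_prod)
    then obtain c2 where c2: "br M2 (X j) = cst c2 * M2 * X j" unfolding LC_def by blast
    have "br (Y * X j) (X j) = Y * br (X j) (X j) + X j * br Y (X j)"
      using br_mult Yin Xin jn by blast
    also have "\<dots> = X j * br Y (X j)" using br_self Xin jn by simp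
    finally have "X j * br Y (X j) = cst c1 * M1 * X j + cst c2 * M2 * X j"
      using YX br_add[OF M1in M2in Xin[OF jn]] c1 c2 by simp
    hence "X j * br Y (X j) = X j * (cst c1 * M1 + cst c2 * M2)"
      by (simp add: algebra_simps)
    hence "br Y (X j) = cst c1 * M1 + cst c2 * M2" using False
      by (simp only: mult_cancel_left) simp
    thus ?thesis using M1G M2G by (auto intro!: alg_gen.ag_add ag_mult ag_cst)
  qed
  have special2: "br (X j) Y \<in> alg_gen G"
    using br_skew[OF Xin[OF jn] Yin] special ag_uminus by simp
  from a have ac: "(\<exists>i\<in>{1..n}. a = X i) \<or> a = Y \<or> (\<exists>i\<in>{1..m}. i \<noteq> j \<and> a = inverse (X i))"
    unfolding laurent_gens_def X_def Y_def by blast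
  from b have bc: "(\<exists>i\<in>{1..n}. b = X i) \<or> b = Y \<or> (\<exists>i\<in>{1..m}. i \<noteq> j \<and> b = inverse (X i))"
    unfolding laurent_gens_def X_def Y_def by blast
  have mn': "\<And>i. i \<in> {1..m} \<Longrightarrow> i \<in> {1..n}" using mn by auto
  have aG: "a \<in> alg_gen G" "b \<in> alg_gen G" using a b G_def by (auto intro: ag_gen)
  show ?thesis
  proof -
    { fix i assume i: "i \<in> {1..n}" "a = X i"
      { fix k assume "k \<in> {1..n}" "b = X k"
        hence ?thesis using LC_alg LCX i aG unfolding G_def by blast }
      moreover { assume "b = Y"
        hence ?thesis using LC_alg LCXY i aG special2 unfolding G_def by (cases "i = j") auto }
      moreover { fix k assume "k \<in> {1..m}" "k \<noteq> j" "b = inverse (X k)"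
        hence ?thesis using LC_alg LC_inv2 Xin mn' LCX i aG unfolding G_def by metis }
      ultimately have ?thesis using bc by blast }
    moreover
    { assume ay: "a = Y"
      { fix k assume "k \<in> {1..n}" "b = X k"
        hence ?thesis using LC_alg LCYX ay aG special unfolding G_def by (cases "k = j") auto }
      moreover { assume "b = Y"
        hence ?thesis using LC_alg LCYY ay aG unfolding G_def by blast }
      moreover { fix k assume "k \<in> {1..m}" "k \<noteq> j" "b = inverse (X k)"
        hence ?thesis using LC_alg LC_inv2 Xin Yin mn' LCYX ay aG unfolding G_def by metis }
      ultimately have ?thesis using bc by blast }
    moreover
    { fix i assume i: "i \<in> {1..m}" "i \<noteq> j" "a = inverse (X i)"
      have Xi: "X i \<in> ratfun n" using Xin mn' i(1) by blast
      { fix k assume k: "k \<in> {1..n}" "b = X k"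
        have "LC (inverse (X i)) (X k)" using LC_inv1 Xi Xin k LCX mn' i by blast
        hence ?thesis using LC_alg i k aG unfolding G_def by blast }
      moreover { assume "b = Y"
        have "LC (inverse (X i)) Y" using LC_inv1 Xi Yin LCXY mn' i by blast
        hence ?thesis using LC_alg i \<open>b = Y\<close> aG unfolding G_def by blast }
      moreover { fix k assume k: "k \<in> {1..m}" "k \<noteq> j" "b = inverse (X k)"
        have Xk: "X k \<in> ratfun n" using Xin mn' k(1) by blast
        have "LC (inverse (X i)) (inverse (X k))"
          using LC_inv1[OF Xi rf_inverse[OF Xk] LC_inv2[OF Xi Xk LCX[OF mn'[OF i(1)] mn'[OF k(1)]]]] .
        hence ?thesis using LC_alg i k aG unfolding G_def by blast }
      ultimately have ?thesis using bc by blast }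
    ultimately show ?thesis using ac G_def by blast
  qed
qed

lemma ub_closed:
  assumes s: "s \<in> mut_class m n (var, B)" and f: "f \<in> upper_bound m n s" and g: "g \<in> upper_bound m n s"
  shows "br f g \<in> upper_bound m n s"
proof -
  have fr: "f \<in> ratfun n" and gr: "g \<in> ratfun n" using f g unfolding upper_bound_def by auto
  have "br f g \<in> alg_gen (laurent_gens m n s j)" if j: "j \<in> {1..m}" for j
  proof (rule alg_gen_closed)
    have jn: "j \<in> {1..n}" using j mn by auto
    have Xin: "\<forall>i\<in>{1..n}. fst s i \<in> ratfun n" using seed_in[OF mn s] .
    show "laurent_gens m n s j \<subseteq> ratfun n" unfolding laurent_gens_def
      using Xin exch_var_in[OF Xin jn] mn by (auto intro: rf_inverse)
    show "\<And>a b. a \<in> laurent_gens m n s j \<Longrightarrow> b \<in> laurent_gens m n s j \<Longrightarrow>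
        br a b \<in> alg_gen (laurent_gens m n s j)" using gens_closed[OF s j] by blast
    show "f \<in> alg_gen (laurent_gens m n s j)" "g \<in> alg_gen (laurent_gens m n s j)"
      using f g j unfolding upper_bound_def by auto
  qed
  thus ?thesis unfolding upper_bound_def using br_closed[OF gr fr] by blast
qed

end

theorem mainTheorem1:
  fixes m n :: nat and B :: "nat \<Rightarrow> nat \<Rightarrow> int" and \<Lambda> :: "nat \<Rightarrow> nat \<Rightarrow> complex"
    and br :: "rf \<Rightarrow> rf \<Rightarrow> rf"
  assumes "m \<le> n"
    and "\<exists>d :: nat \<Rightarrow> int. (\<forall>i\<in>{1..m}. d i > 0) \<and>
           (\<forall>i\<in>{1..m}. \<forall>j\<in>{1..m}. d i * B i j = - (d j * B j i))"
    and "\<forall>i\<in>{1..n}. \<forall>j\<in>{1..n}. \<Lambda> i j = - \<Lambda> j i"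
    and "is_lambda_bracket n \<Lambda> br"
    and "compatible br m n (var, B)"
  shows "(\<forall>f\<in>upper_bound m n (var, B). \<forall>g\<in>upper_bound m n (var, B).
            br f g \<in> upper_bound m n (var, B)) \<and>
         (\<forall>f\<in>upper_cluster_algebra m n (var, B). \<forall>g\<in>upper_cluster_algebra m n (var, B).
            br f g \<in> upper_cluster_algebra m n (var, B))"
proof -
  note A0 = assms(4)[unfolded is_lambda_bracket_def]
  note A1 = conjunct1[OF A0]
  note A2 = conjunct1[OF conjunct2[OF A0]]
  note A3 = conjunct1[OF conjunct2[OF conjunct2[OF A0]]]
  note A4 = conjunct2[OF conjunct2[OF conjunct2[OF A0]]]
  interpret lbr_seed n br m B
  proof
    fix f g h assume fgh: "f \<in> ratfun n" "g \<in> ratfun n" "h \<in> ratfun n"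
    show "br (f + g) h = br f h + br g h" using A1[rule_format, OF fgh] by (rule conjunct1)
    show "br (f * g) h = f * br g h + g * br f h" using A1[rule_format, OF fgh] by (rule conjunct2)
  next
    fix f g c assume fg: "f \<in> ratfun n" "g \<in> ratfun n"
    show "br (cst c * f) g = cst c * br f g" using A2[rule_format, OF fg] .
  next
    fix f g assume fg: "f \<in> ratfun n" "g \<in> ratfun n"
    show "br f g = - br g f" using A3[rule_format, OF fg] .
  next
    fix i j :: nat assume ij: "i \<in> {1..n}" "j \<in> {1..n}"
    show "br (var i) (var j) \<in> ratfun n" unfolding A4[rule_format, OF ij]
      using ij by (intro rf_mult rf_cst rf_var)
  next
    show "m \<le> n" using assms(1) .
    show "compatible br m n (var, B)" using assms(5) .
  qed
  show ?thesis
  proof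
    show "\<forall>f\<in>upper_bound m n (var, B). \<forall>g\<in>upper_bound m n (var, B).
            br f g \<in> upper_bound m n (var, B)" using ub_closed[OF mc_init] by blast
    show "\<forall>f\<in>upper_cluster_algebra m n (var, B). \<forall>g\<in>upper_cluster_algebra m n (var, B).
            br f g \<in> upper_cluster_algebra m n (var, B)"
    proof (intro ballI)
      fix f g assume f: "f \<in> upper_cluster_algebra m n (var, B)" and g: "g \<in> upper_cluster_algebra m n (var, B)"
      have fr: "f \<in> ratfun n" and gr: "g \<in> ratfun n" using f g unfolding upper_cluster_algebra_def by auto
      show "br f g \<in> upper_cluster_algebra m n (var, B)" unfolding upper_cluster_algebra_def
      proof (intro CollectI conjI ballI)
        show "br f g \<in> ratfun n" using br_closed[OF gr fr] .
        fix s assume s: "s \<in> mut_class m n (var, B)"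
        show "br f g \<in> upper_bound m n s"
          using ub_closed[OF s] f g s unfolding upper_cluster_algebra_def by blast
      qed
    qed
  qed
qed

end
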